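(* Let $f(\pi)=\pi f_1(0,\pi)+(1-\pi)f_0(0,\pi)$ and suppose $|f'(\pi)|\le L_{UN}$ for all $\pi\in[0,1]$ with some $L_{UN}<1$ (so the unconstrained policy reaches equality). Suppose $\pi_0(1|A)\ge\pi_0(1|B)$ and $g_Au(1)+(1-g_A)u(0)\le0$, and work in continuous time. Then: (i) $\max_{\pi\in[0,1]}|f_1(0,\pi)-f_0(0,\pi)|<1$, and the AA1 policy applied at all times reaches equality in continuous time; (ii) letting $\pi_t^{UN}(1|\cdot)$ and $\pi_t^{AA1}(1|\cdot)$ be the continuous-time trajectories from the same initial profiles under UN and under AA1 respectively, and $U_t(UN)$, $U_t(AA1)$ the institutional utilities of the respective policies evaluated on the respective profiles at time $t$, we have $U_t(UN)\ge U_t(AA1)$ for all $t\ge0$.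
   Context: Two groups $A,B$ with population fractions $g_A\in[0,1]$, $g_B=1-g_A$; $\neg j$ is the other group. Group $j$ has qualification profile $\pi_t(1|j)\in[0,1]$, $\pi_t(0|j)=1-\pi_t(1|j)$. A policy assigns $\tau(v;j)\in[0,1]$; utilities $u(0)\le0\le u(1)$; institutional utility $U_t(\tau)=\sum_jg_j\sum_vu(v)\tau(v;j)\pi_t(v|j)$. Selection rates $\beta_t(v;j)=\tau(v;j)\pi_t(v|j)$. Dynamics: continuously differentiable $f_0,f_1:[0,1]^2\to[0,1]$; continuous time $\frac{d}{dt}\pi_t(1|j)=\pi_t(1|j)(f_1(\beta_t(0;j),\beta_t(1;j))-1)+(1-\pi_t(1|j))f_0(\beta_t(0;j),\beta_t(1;j))$, policy determined by current profiles. UN: $\tau(1;j)=1,\tau(0;j)=0$, so each group follows $\dot\pi=f(\pi)-\pi$. Group $j$ is advantaged at $t$ if $\pi_t(1|j)\ge\pi_t(1|\neg j)$. AA1 w.r.t. advantaged $j$: $\tau(1;j)=\pi_t(1|\neg j)/\pi_t(1|j)$, $\tau(0;j)=0$, $\tau(1;\neg j)=1$, $\tau(0;\neg j)=0$ (selection rates $\beta_t(0;\cdot)=0$, $\beta_t(1;\cdot)=\pi_t(1|\neg j)$ for both groups); this is the utility-maximizing policy under the constraint of equal total selection rates when $g_ju(1)+(1-g_j)u(0)\le0$. Applied at all times w.r.t. the currently advantaged group. Reaching equality: $|\pi_t(1|A)-\pi_t(1|B)|\to0$ as $t\to\infty$. *)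

theory Defs
  imports "HOL-Analysis.Analysis"
begin

datatype grp = GA | GB

fun other :: "grp \<Rightarrow> grp" where
  "other GA = GB" | "other GB = GA"

text \<open>A profile maps each group j to pi(1|j). pi(0|j) = 1 - pi(1|j).\<close>
definition prof :: "(grp \<Rightarrow> real) \<Rightarrow> nat \<Rightarrow> grp \<Rightarrow> real" where
  "prof p v j = (if v = 1 then p j else 1 - p j)"

definition gfrac :: "real \<Rightarrow> grp \<Rightarrow> real" where
  "gfrac gA j = (if j = GA then gA else 1 - gA)"

definition inst_utility :: "real \<Rightarrow> (nat \<Rightarrow> real) \<Rightarrow> (nat \<Rightarrow> grp \<Rightarrow> real) \<Rightarrow> (grp \<Rightarrow> real) \<Rightarrow> real" where
  "inst_utility gA u tau p =
     (\<Sum>j\<in>(UNIV::grp set). gfrac gA j * (\<Sum>v\<in>{0::nat,1}. u v * tau v j * prof p v j))"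

definition sel_rate :: "(nat \<Rightarrow> grp \<Rightarrow> real) \<Rightarrow> (grp \<Rightarrow> real) \<Rightarrow> nat \<Rightarrow> grp \<Rightarrow> real" where
  "sel_rate tau p v j = tau v j * prof p v j"

definition UN_policy :: "(grp \<Rightarrow> real) \<Rightarrow> nat \<Rightarrow> grp \<Rightarrow> real" where
  "UN_policy p v j = (if v = 1 then 1 else 0)"

definition AA1_wrt :: "grp \<Rightarrow> (grp \<Rightarrow> real) \<Rightarrow> nat \<Rightarrow> grp \<Rightarrow> real" where
  "AA1_wrt jadv p v j =
     (if v = 1 then (if j = jadv then p (other jadv) / p jadv else 1) else 0)"

text \<open>Currently advantaged group (ties resolved in favour of A; either choice gives
  the same selection rates).\<close>
definition advantaged :: "(grp \<Rightarrow> real) \<Rightarrow> grp" where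
  "advantaged p = (if p GA \<ge> p GB then GA else GB)"

definition AA1_policy :: "(grp \<Rightarrow> real) \<Rightarrow> nat \<Rightarrow> grp \<Rightarrow> real" where
  "AA1_policy p = AA1_wrt (advantaged p) p"

definition ct_trajectory ::
  "(real \<Rightarrow> real \<Rightarrow> real) \<Rightarrow> (real \<Rightarrow> real \<Rightarrow> real) \<Rightarrow>
   ((grp \<Rightarrow> real) \<Rightarrow> nat \<Rightarrow> grp \<Rightarrow> real) \<Rightarrow> (real \<Rightarrow> grp \<Rightarrow> real) \<Rightarrow> bool" where
  "ct_trajectory f0 f1 pol x \<longleftrightarrow>
     (\<forall>t\<ge>0. \<forall>j. x t j \<in> {0..1}) \<and>
     (\<forall>t\<ge>0. \<forall>j. ((\<lambda>s. x s j) has_real_derivative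
        (let \<beta> = sel_rate (pol (x t)) (x t) in
           x t j * (f1 (\<beta> 0 j) (\<beta> 1 j) - 1) + (1 - x t j) * f0 (\<beta> 0 j) (\<beta> 1 j)))
       (at t within {0..}))"

definition reaches_equality :: "(real \<Rightarrow> grp \<Rightarrow> real) \<Rightarrow> bool" where
  "reaches_equality x \<longleftrightarrow> ((\<lambda>t. \<bar>x t GA - x t GB\<bar>) \<longlongrightarrow> 0) at_top"

definition C1_on_square :: "(real \<Rightarrow> real \<Rightarrow> real) \<Rightarrow> bool" where
  "C1_on_square h \<longleftrightarrow>
     (\<exists>D1 D2 :: real \<times> real \<Rightarrow> real.
        continuous_on ({0..1} \<times> {0..1}) D1 \<and> continuous_on ({0..1} \<times> {0..1}) D2 \<and>
        (\<forall>z\<in>{0..1} \<times> {0..1}.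
           ((\<lambda>w. h (fst w) (snd w)) has_derivative (\<lambda>d. D1 z * fst d + D2 z * snd d))
             (at z within {0..1} \<times> {0..1})))"

end

theory Submission imports Defs begin


lemma sign_pres:
  fixes d D :: "real \<Rightarrow> real"
  assumes d0: "d 0 \<ge> 0"
    and der: "\<And>t. t \<ge> 0 \<Longrightarrow> (d has_real_derivative D t) (at t within {0..})"
    and pos: "\<And>t. t \<ge> 0 \<Longrightarrow> d t < 0 \<Longrightarrow> D t \<ge> 0"
    and t: "t \<ge> 0"
  shows "d t \<ge> 0"
proof (rule ccontr)
  assume neg: "\<not> d t \<ge> 0"
  have cont: "continuous_on {0..t} d"
    unfolding continuous_on_eq_continuous_within
    by (metis DERIV_continuous DERIV_subset atLeastAtMost_iff atLeast_iff der subsetI continuous_within_subset)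
  define S where "S = d -` {0..} \<inter> {0..t}"
  have "closed S" unfolding S_def using closed_vimage_Int[OF _ cont, of "{0..}"] by auto
  hence "compact S" unfolding S_def by (simp add: compact_eq_bounded_closed bounded_Int S_def)
  moreover have "0 \<in> S" using d0 t by (auto simp: S_def)
  ultimately obtain s0 where s0: "s0 \<in> S" "\<And>y. y \<in> S \<Longrightarrow> y \<le> s0"
    using continuous_attains_sup[of S "\<lambda>x. x"] by (auto intro: continuous_on_id)
  have s0t: "s0 < t" using s0(1) neg by (auto simp: S_def less_eq_real_def)
  have negs: "d y < 0" if "s0 < y" "y \<le> t" for y
    using s0(2)[of y] that s0(1) by (force simp: S_def)
  have "d s0 \<le> d t"
  proof (rule DERIV_nonneg_imp_increasing_open[of s0 t d])
    show "s0 \<le> t" using s0t by simp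
    show "continuous_on {s0..t} d"
      by (rule continuous_on_subset[OF cont]) (use s0(1) in \<open>auto simp: S_def\<close>)
    fix x assume x: "s0 < x" "x < t"
    have x0: "x > 0" using x s0(1) by (auto simp: S_def)
    have "at x within {0..} = at x" by (rule at_within_interior) (use x0 in auto)
    hence "DERIV d x :> D x" using der[of x] x0 by simp
    moreover have "D x \<ge> 0" using pos[of x] negs[of x] x x0 by auto
    ultimately show "\<exists>y. DERIV d x :> y \<and> y \<ge> 0" by blast
  qed
  thus False using s0(1) neg by (auto simp: S_def)
qed

lemma deriv_max:
  fixes \<phi> :: "real \<Rightarrow> real"
  assumes der: "(\<phi> has_real_derivative D) (at p within {0..1})"
    and p: "p \<in> {0..1}" and mx: "\<And>y. y \<in> {0..1} \<Longrightarrow> \<phi> y \<le> \<phi> p"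
  shows "(p < 1 \<longrightarrow> D \<le> 0) \<and> (0 < p \<longrightarrow> D \<ge> 0)"
proof safe
  assume p1: "p < 1"
  have "(\<phi> has_real_derivative D) (at p within {p..1})"
    using der by (rule DERIV_subset) (use p in auto)
  hence "((\<lambda>y. (\<phi> y - \<phi> p) / (y - p)) \<longlongrightarrow> D) (at_right p)"
    using p1 by (simp add: has_field_derivative_iff at_within_Icc_at_right)
  moreover have "eventually (\<lambda>y. (\<phi> y - \<phi> p) / (y - p) \<le> 0) (at_right p)"
    unfolding eventually_at_right_field
  proof (intro exI[of _ 1] conjI allI impI)
    fix y assume "y > p" "y < 1"
    thus "(\<phi> y - \<phi> p) / (y - p) \<le> 0" using mx[of y] p
      by (intro divide_nonpos_pos) auto
  qed (use p1 in auto)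
  ultimately show "D \<le> 0" by (intro tendsto_upperbound) auto
next
  assume p0: "0 < p"
  have "(\<phi> has_real_derivative D) (at p within {0..p})"
    using der by (rule DERIV_subset) (use p in auto)
  hence "((\<lambda>y. (\<phi> y - \<phi> p) / (y - p)) \<longlongrightarrow> D) (at_left p)"
    using p0 by (simp add: has_field_derivative_iff at_within_Icc_at_left)
  moreover have "eventually (\<lambda>y. (\<phi> y - \<phi> p) / (y - p) \<ge> 0) (at_left p)"
    unfolding eventually_at_left_field
  proof (intro exI[of _ 0] conjI allI impI)
    fix y assume "y > 0" "y < p"
    thus "(\<phi> y - \<phi> p) / (y - p) \<ge> 0" using mx[of y] p
      by (intro divide_nonpos_neg) auto
  qed (use p0 in auto)
  ultimately show "D \<ge> 0" by (intro tendsto_lowerbound) auto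
qed

lemma C1_partial:
  assumes "C1_on_square h"
  shows "\<exists>a. \<forall>p\<in>{0..1}. ((\<lambda>p. h 0 p) has_real_derivative a p) (at p within {0..1})"
proof -
  obtain D1 D2 :: "real \<times> real \<Rightarrow> real" where
    H: "\<And>z. z\<in>{0..1} \<times> {0..1} \<Longrightarrow>
           ((\<lambda>w. h (fst w) (snd w)) has_derivative (\<lambda>d. D1 z * fst d + D2 z * snd d))
             (at z within {0..1} \<times> {0..1})"
    using assms unfolding C1_on_square_def by blast
  have "((\<lambda>p. h 0 p) has_real_derivative D2 (0,p)) (at p within {0..1})" if p: "p \<in> {0..1}" for p
  proof -
    have dp: "((\<lambda>p::real. (0::real,p)) has_derivative (\<lambda>d. (0,d))) (at p within {0..1})"
      by (intro has_derivative_Pair has_derivative_const has_derivative_ident)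
    have sub: "(\<lambda>p::real. (0::real,p)) ` {0..1} \<subseteq> {0..1} \<times> {0..1}" by auto
    from has_derivative_in_compose2[OF H sub p dp]
    have "((\<lambda>p. h 0 p) has_derivative (\<lambda>y. D1 (0,p) * 0 + D2 (0,p) * y)) (at p within {0..1})"
      by (simp only: fst_conv snd_conv)
    moreover have "(\<lambda>y. D1 (0,p) * 0 + D2 (0,p) * y) = (*) (D2 (0,p))" by auto
    ultimately have "((\<lambda>p. h 0 p) has_derivative (*) (D2 (0,p))) (at p within {0..1})" by (simp only:)
    thus ?thesis by (simp only: has_field_derivative_def)
  qed
  hence "\<forall>p\<in>{0..1}. ((\<lambda>p. h 0 p) has_real_derivative D2 (0,p)) (at p within {0..1})" by (rule ballI)
  thus ?thesis by (rule exI[of _ "\<lambda>p. D2 (0,p)"])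
qed

lemma sel_UN: "sel_rate (UN_policy p) p 0 j = 0" "sel_rate (UN_policy p) p 1 j = p j"
  by (auto simp: sel_rate_def UN_policy_def prof_def)

lemma divmul_aux: "(a::real) \<in> {0..1} \<Longrightarrow> b \<in> {0..1} \<Longrightarrow> a \<le> b \<Longrightarrow> a / b * b = a"
  by (cases "b = 0") auto

lemma sel_AA:
  assumes "p GA \<in> {0..1}" "p GB \<in> {0..1}"
  shows "sel_rate (AA1_policy p) p 0 j = 0" "sel_rate (AA1_policy p) p 1 j = min (p GA) (p GB)"
   apply (simp add: sel_rate_def AA1_policy_def AA1_wrt_def prof_def)
  using assms divmul_aux[of "p GB" "p GA"] divmul_aux[of "p GA" "p GB"]
  by (cases j; cases "p GB \<le> p GA"; simp add: sel_rate_def AA1_policy_def AA1_wrt_def prof_def advantaged_def min_def)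

lemma util_UN: "inst_utility gA u (UN_policy p) p = u 1 * (gA * p GA + (1 - gA) * p GB)"
proof -
  have U: "(UNIV::grp set) = {GA, GB}" by (auto intro: grp.exhaust)
  show ?thesis by (simp add: inst_utility_def U gfrac_def UN_policy_def prof_def algebra_simps)
qed

lemma util_AA:
  assumes "p GA \<in> {0..1}" "p GB \<in> {0..1}" "p GA \<ge> p GB"
  shows "inst_utility gA u (AA1_policy p) p = u 1 * p GB"
proof -
  have U: "(UNIV::grp set) = {GA, GB}" by (auto intro: grp.exhaust)
  show ?thesis using assms divmul_aux[of "p GB" "p GA"]
    by (simp add: inst_utility_def U gfrac_def AA1_policy_def AA1_wrt_def advantaged_def prof_def algebra_simps)
qed



lemma exp_decay: "(\<delta>::real) > 0 \<Longrightarrow> ((\<lambda>t. exp (- (\<delta> * t))) \<longlongrightarrow> 0) at_top"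
  apply (rule filterlim_compose[OF exp_at_bot])
  apply (rule filterlim_compose[OF filterlim_uminus_at_bot_at_top])
  by (rule filterlim_tendsto_pos_mult_at_top[OF tendsto_const _ filterlim_ident])

theorem mainTheorem10:
  fixes f0 f1 :: "real \<Rightarrow> real \<Rightarrow> real"
    and gA LUN :: real and u :: "nat \<Rightarrow> real"
    and xUN xAA :: "real \<Rightarrow> grp \<Rightarrow> real"
  assumes f0_range: "\<forall>a\<in>{0..1}. \<forall>b\<in>{0..1}. f0 a b \<in> {0..1}"
    and f1_range: "\<forall>a\<in>{0..1}. \<forall>b\<in>{0..1}. f1 a b \<in> {0..1}"
    and f0_C1: "C1_on_square f0" and f1_C1: "C1_on_square f1"
    and gA: "gA \<in> {0..1}"
    and u: "u 0 \<le> 0" "0 \<le> u 1"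
    and LUN: "LUN < 1"
    and fderiv: "\<forall>\<pi>\<in>{0..1}. \<forall>D.
        ((\<lambda>p. p * f1 0 p + (1 - p) * f0 0 p) has_real_derivative D) (at \<pi> within {0..1})
          \<longrightarrow> \<bar>D\<bar> \<le> LUN"
    and gA_cond: "gA * u 1 + (1 - gA) * u 0 \<le> 0"
    and UN_traj: "ct_trajectory f0 f1 UN_policy xUN"
    and AA_traj: "ct_trajectory f0 f1 AA1_policy xAA"
    and same_init: "xUN 0 = xAA 0"
    and A_adv0: "xAA 0 GA \<ge> xAA 0 GB"
  shows "(SUP \<pi>\<in>{0..1}. \<bar>f1 0 \<pi> - f0 0 \<pi>\<bar>) < 1
       \<and> reaches_equality xAA
       \<and> (\<forall>t\<ge>0. inst_utility gA u (UN_policy (xUN t)) (xUN t) \<ge> inst_utility gA u (AA1_policy (xAA t)) (xAA t))"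
proof -
  have r1: "\<And>b. b \<in> {0..1} \<Longrightarrow> 0 \<le> f1 0 b \<and> f1 0 b \<le> 1" using f1_range by auto
  have r0: "\<And>b. b \<in> {0..1} \<Longrightarrow> 0 \<le> f0 0 b \<and> f0 0 b \<le> 1" using f0_range by auto
  obtain a1 where a1: "\<And>p. p \<in> {0..1} \<Longrightarrow> ((\<lambda>p. f1 0 p) has_real_derivative a1 p) (at p within {0..1})"
    using C1_partial[OF f1_C1] by blast
  obtain a0 where a0: "\<And>p. p \<in> {0..1} \<Longrightarrow> ((\<lambda>p. f0 0 p) has_real_derivative a0 p) (at p within {0..1})"
    using C1_partial[OF f0_C1] by blast
  define F where "F p = p * f1 0 p + (1 - p) * f0 0 p" for p
  have Fder: "(F has_real_derivative (f1 0 p + p * a1 p - f0 0 p + (1 - p) * a0 p)) (at p within {0..1})"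
    if p: "p \<in> {0..1}" for p
    unfolding F_def using a1[OF p] a0[OF p]
    by (auto intro!: derivative_eq_intros simp: algebra_simps)
  have Fbound: "\<bar>f1 0 p + p * a1 p - f0 0 p + (1 - p) * a0 p\<bar> \<le> LUN" if p: "p \<in> {0..1}" for p
    using fderiv Fder[OF p] p unfolding F_def by blast
  have Flip: "\<bar>F a - F b\<bar> \<le> LUN * \<bar>a - b\<bar>" if "a \<in> {0..1}" "b \<in> {0..1}" for a b
    using field_differentiable_bound[OF convex_real_interval(5) Fder, of LUN a b] Fbound that by auto
  have L0: "LUN \<ge> 0" using Fbound[of 0] abs_ge_zero[of "f1 0 0 + 0 * a1 0 - f0 0 0 + (1 - 0) * a0 0"] by simp
  have Flip1: "F b - F a \<le> b - a" if "a \<in> {0..1}" "b \<in> {0..1}" "a \<le> b" for a b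
  proof -
    have "F b - F a \<le> LUN * \<bar>b - a\<bar>" using Flip[of b a] that by auto
    also have "LUN * \<bar>b - a\<bar> \<le> \<bar>b - a\<bar>" using LUN L0 by (intro mult_left_le_one_le) auto
    finally show ?thesis using that by simp
  qed
  define G where "G p = \<bar>f1 0 p - f0 0 p\<bar>" for p
  have contG: "continuous_on {0..1} G"
  proof -
    have "continuous_on {0..1} (\<lambda>p. f1 0 p)" "continuous_on {0..1} (\<lambda>p. f0 0 p)"
      unfolding continuous_on_eq_continuous_within using a1 a0 DERIV_continuous by blast+
    thus ?thesis unfolding G_def by (intro continuous_intros)
  qed
  obtain ps where ps: "ps \<in> {0..1}" "\<And>y. y \<in> {0..1} \<Longrightarrow> G y \<le> G ps"
    using continuous_attains_sup[OF compact_Icc _ contG] by auto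
  have supeq: "(SUP \<pi>\<in>{0..1}. \<bar>f1 0 \<pi> - f0 0 \<pi>\<bar>) = G ps"
    using ps unfolding G_def[symmetric] by (intro cSup_eq_maximum) auto
  have Gps: "G ps < 1"
  proof (rule ccontr)
    assume "\<not> G ps < 1"
    hence "G ps \<ge> 1" by simp
    with r1[OF ps(1)] r0[OF ps(1)]
    have cs: "(f1 0 ps = 1 \<and> f0 0 ps = 0) \<or> (f1 0 ps = 0 \<and> f0 0 ps = 1)"
      unfolding G_def by auto
    have mf0: "((\<lambda>p. - f0 0 p) has_real_derivative - a0 ps) (at ps within {0..1})"
      using a0[OF ps(1)] by (rule DERIV_minus)
    have mf1: "((\<lambda>p. - f1 0 p) has_real_derivative - a1 ps) (at ps within {0..1})"
      using a1[OF ps(1)] by (rule DERIV_minus)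
    from cs show False
    proof
      assume c: "f1 0 ps = 1 \<and> f0 0 ps = 0"
      have s1: "(ps < 1 \<longrightarrow> a1 ps \<le> 0) \<and> (0 < ps \<longrightarrow> a1 ps \<ge> 0)"
        using deriv_max[OF a1[OF ps(1)] ps(1)] r1 c by auto
      have s0: "(ps < 1 \<longrightarrow> - a0 ps \<le> 0) \<and> (0 < ps \<longrightarrow> - a0 ps \<ge> 0)"
        using deriv_max[OF mf0 ps(1)] r0 c by auto
      have "ps * a1 ps \<ge> 0" using s1 ps(1) by (cases "ps = 0") auto
      moreover have "(1 - ps) * a0 ps \<ge> 0" using s0 ps(1) by (cases "ps = 1") auto
      ultimately show False using Fbound[OF ps(1)] c LUN by auto
    next
      assume c: "f1 0 ps = 0 \<and> f0 0 ps = 1"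
      have s1: "(ps < 1 \<longrightarrow> - a1 ps \<le> 0) \<and> (0 < ps \<longrightarrow> - a1 ps \<ge> 0)"
        using deriv_max[OF mf1 ps(1)] r1 c by auto
      have s0: "(ps < 1 \<longrightarrow> a0 ps \<le> 0) \<and> (0 < ps \<longrightarrow> a0 ps \<ge> 0)"
        using deriv_max[OF a0[OF ps(1)] ps(1)] r0 c by auto
      have "ps * a1 ps \<le> 0" using s1 ps(1) by (cases "ps = 0") (auto intro: mult_nonneg_nonpos)
      moreover have "(1 - ps) * a0 ps \<le> 0" using s0 ps(1) by (cases "ps = 1") (auto intro: mult_nonneg_nonpos)
      ultimately show False using Fbound[OF ps(1)] c LUN by auto
    qed
  qed
  have part1: "(SUP \<pi>\<in>{0..1}. \<bar>f1 0 \<pi> - f0 0 \<pi>\<bar>) < 1" using supeq Gps by simp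
  have Gle: "G p \<le> G ps" if "p \<in> {0..1}" for p using ps that by auto
  have rAA: "\<And>t j. t \<ge> 0 \<Longrightarrow> 0 \<le> xAA t j \<and> xAA t j \<le> 1"
    using AA_traj unfolding ct_trajectory_def by auto
  have rUN: "\<And>t j. t \<ge> 0 \<Longrightarrow> 0 \<le> xUN t j \<and> xUN t j \<le> 1"
    using UN_traj unfolding ct_trajectory_def by auto
  define m where "m t = min (xAA t GA) (xAA t GB)" for t
  have mr: "m t \<in> {0..1}" if "t \<ge> 0" for t using rAA[OF that] by (auto simp: m_def min_def)
  have dAA: "((\<lambda>s. xAA s j) has_real_derivative
      xAA t j * (f1 0 (m t) - 1) + (1 - xAA t j) * f0 0 (m t)) (at t within {0..})"
    if t: "t \<ge> 0" for t j
  proof -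
    have "((\<lambda>s. xAA s j) has_real_derivative
        (let \<beta> = sel_rate (AA1_policy (xAA t)) (xAA t) in
           xAA t j * (f1 (\<beta> 0 j) (\<beta> 1 j) - 1) + (1 - xAA t j) * f0 (\<beta> 0 j) (\<beta> 1 j)))
       (at t within {0..})"
      using AA_traj t unfolding ct_trajectory_def by blast
    moreover have "sel_rate (AA1_policy (xAA t)) (xAA t) (Suc 0) j = m t"
      using sel_AA(2)[of "xAA t" j] rAA[OF t, of GA] rAA[OF t, of GB] by (simp add: m_def)
    ultimately show ?thesis using rAA[OF t, of GA] rAA[OF t, of GB]
      by (simp add: Let_def sel_AA m_def)
  qed
  have dUN: "((\<lambda>s. xUN s j) has_real_derivative F (xUN t j) - xUN t j) (at t within {0..})"
    if t: "t \<ge> 0" for t j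
  proof -
    have "((\<lambda>s. xUN s j) has_real_derivative
        (let \<beta> = sel_rate (UN_policy (xUN t)) (xUN t) in
           xUN t j * (f1 (\<beta> 0 j) (\<beta> 1 j) - 1) + (1 - xUN t j) * f0 (\<beta> 0 j) (\<beta> 1 j)))
       (at t within {0..})"
      using UN_traj t unfolding ct_trajectory_def by blast
    moreover have "sel_rate (UN_policy (xUN t)) (xUN t) (Suc 0) j = xUN t j"
      using sel_UN(2)[of "xUN t" j] by simp
    ultimately show ?thesis by (simp add: Let_def sel_UN F_def algebra_simps)
  qed
  define d where "d t = xAA t GA - xAA t GB" for t
  define k where "k t = f1 0 (m t) - f0 0 (m t) - 1" for t
  have dd: "(d has_real_derivative d t * k t) (at t within {0..})" if t: "t \<ge> 0" for t
  proof -
    have "(d has_real_derivative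
       (xAA t GA * (f1 0 (m t) - 1) + (1 - xAA t GA) * f0 0 (m t)) -
       (xAA t GB * (f1 0 (m t) - 1) + (1 - xAA t GB) * f0 0 (m t))) (at t within {0..})"
      unfolding d_def[abs_def] by (intro DERIV_diff dAA t)
    thus ?thesis by (simp add: d_def k_def algebra_simps)
  qed
  have kle0: "k t \<le> 0" if "t \<ge> 0" for t using r1[OF mr[OF that]] r0[OF mr[OF that]] by (simp add: k_def)
  have dpos: "d t \<ge> 0" if "t \<ge> 0" for t
  proof (rule sign_pres[OF _ dd _ that])
    show "0 \<le> d 0" using A_adv0 by (simp add: d_def)
    show "0 \<le> d s * k s" if "s \<ge> 0" "d s < 0" for s
      using kle0[OF that(1)] that(2) by (simp add: mult_nonpos_nonpos)
  qed
  define \<delta> where "\<delta> = 1 - G ps"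
  have \<delta>: "\<delta> > 0" using Gps by (simp add: \<delta>_def)
  have kd: "k t \<le> - \<delta>" if "t \<ge> 0" for t
    using Gle[OF mr[OF that]] by (simp add: k_def G_def \<delta>_def)
  have ddec: "d t \<le> exp (- (\<delta> * t))" if t: "t \<ge> 0" for t
  proof -
    define h where "h s = 1 - d s * exp (\<delta> * s)" for s
    have "h t \<ge> 0"
    proof (rule sign_pres[of h "\<lambda>s. - (d s * k s * exp (\<delta> * s) + d s * (exp (\<delta> * s) * \<delta>))"])
      show "0 \<le> h 0" using rAA[of 0 GA] rAA[of 0 GB] by (simp add: h_def d_def)
      show "(h has_real_derivative - (d s * k s * exp (\<delta> * s) + d s * (exp (\<delta> * s) * \<delta>))) (at s within {0..})"
        if "s \<ge> 0" for s unfolding h_def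
        by (auto intro!: derivative_eq_intros dd[OF that])
      show "0 \<le> - (d s * k s * exp (\<delta> * s) + d s * (exp (\<delta> * s) * \<delta>))" if "s \<ge> 0" for s
      proof -
        have "d s * k s * exp (\<delta> * s) + d s * (exp (\<delta> * s) * \<delta>) = (d s * exp (\<delta> * s)) * (k s + \<delta>)"
          by (simp add: algebra_simps)
        also have "\<dots> \<le> 0" using dpos[OF that] kd[OF that]
          by (intro mult_nonneg_nonpos) auto
        finally show ?thesis by simp
      qed
    qed (use t in auto)
    hence "d t * exp (\<delta> * t) \<le> 1" by (simp add: h_def)
    hence "d t \<le> 1 / exp (\<delta> * t)" by (simp add: field_simps)
    thus ?thesis by (simp add: exp_minus field_simps)
  qed
  have part2: "reaches_equality xAA"
    unfolding reaches_equality_def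
  proof (rule tendsto_sandwich[OF _ _ tendsto_const exp_decay[OF \<delta>]])
    show "\<forall>\<^sub>F t in at_top. 0 \<le> \<bar>xAA t GA - xAA t GB\<bar>" by simp
    show "\<forall>\<^sub>F t in at_top. \<bar>xAA t GA - xAA t GB\<bar> \<le> exp (- (\<delta> * t))"
      using eventually_ge_at_top[of "0::real"]
    proof (rule eventually_mono)
      fix t :: real assume "t \<ge> 0"
      thus "\<bar>xAA t GA - xAA t GB\<bar> \<le> exp (- (\<delta> * t))" using dpos ddec unfolding d_def by auto
    qed
  qed
  have dUNpos: "xUN t GA - xUN t GB \<ge> 0" if t: "t \<ge> 0" for t
  proof (rule sign_pres[of "\<lambda>s. xUN s GA - xUN s GB" "\<lambda>s. (F (xUN s GA) - xUN s GA) - (F (xUN s GB) - xUN s GB)", OF _ _ _ t])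
    show "0 \<le> xUN 0 GA - xUN 0 GB" using A_adv0 same_init by simp
    show "((\<lambda>s. xUN s GA - xUN s GB) has_real_derivative (F (xUN s GA) - xUN s GA) - (F (xUN s GB) - xUN s GB)) (at s within {0..})"
      if "s \<ge> 0" for s by (intro DERIV_diff dUN that)
    show "0 \<le> (F (xUN s GA) - xUN s GA) - (F (xUN s GB) - xUN s GB)"
      if "s \<ge> 0" "xUN s GA - xUN s GB < 0" for s
      using Flip1[of "xUN s GA" "xUN s GB"] rUN[OF that(1), of GA] rUN[OF that(1), of GB] that(2) by auto
  qed
  have dBB: "((\<lambda>s. xAA s GB) has_real_derivative F (xAA t GB) - xAA t GB) (at t within {0..})"
    if t: "t \<ge> 0" for t
  proof -
    have "m t = xAA t GB" using dpos[OF t] by (simp add: m_def d_def min_def)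
    thus ?thesis using dAA[OF t, of GB] by (simp add: F_def algebra_simps)
  qed
  have eq1: "xUN t GB - xAA t GB \<ge> 0" if t: "t \<ge> 0" for t
  proof (rule sign_pres[of "\<lambda>s. xUN s GB - xAA s GB" "\<lambda>s. (F (xUN s GB) - xUN s GB) - (F (xAA s GB) - xAA s GB)", OF _ _ _ t])
    show "0 \<le> xUN 0 GB - xAA 0 GB" using same_init by simp
    show "((\<lambda>s. xUN s GB - xAA s GB) has_real_derivative (F (xUN s GB) - xUN s GB) - (F (xAA s GB) - xAA s GB)) (at s within {0..})"
      if "s \<ge> 0" for s by (intro DERIV_diff dUN dBB that)
    show "0 \<le> (F (xUN s GB) - xUN s GB) - (F (xAA s GB) - xAA s GB)"
      if "s \<ge> 0" "xUN s GB - xAA s GB < 0" for s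
      using Flip1[of "xUN s GB" "xAA s GB"] rUN[OF that(1), of GB] rAA[OF that(1), of GB] that(2) by auto
  qed
  have eq2: "xAA t GB - xUN t GB \<ge> 0" if t: "t \<ge> 0" for t
  proof (rule sign_pres[of "\<lambda>s. xAA s GB - xUN s GB" "\<lambda>s. (F (xAA s GB) - xAA s GB) - (F (xUN s GB) - xUN s GB)", OF _ _ _ t])
    show "0 \<le> xAA 0 GB - xUN 0 GB" using same_init by simp
    show "((\<lambda>s. xAA s GB - xUN s GB) has_real_derivative (F (xAA s GB) - xAA s GB) - (F (xUN s GB) - xUN s GB)) (at s within {0..})"
      if "s \<ge> 0" for s by (intro DERIV_diff dUN dBB that)
    show "0 \<le> (F (xAA s GB) - xAA s GB) - (F (xUN s GB) - xUN s GB)"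
      if "s \<ge> 0" "xAA s GB - xUN s GB < 0" for s
      using Flip1[of "xAA s GB" "xUN s GB"] rUN[OF that(1), of GB] rAA[OF that(1), of GB] that(2) by auto
  qed
  have part3: "\<forall>t\<ge>0. inst_utility gA u (UN_policy (xUN t)) (xUN t) \<ge> inst_utility gA u (AA1_policy (xAA t)) (xAA t)"
  proof (intro allI impI)
    fix t :: real assume t: "t \<ge> 0"
    have e: "xUN t GB = xAA t GB" using eq1[OF t] eq2[OF t] by simp
    have "inst_utility gA u (AA1_policy (xAA t)) (xAA t) = u 1 * xAA t GB"
      using rAA[OF t, of GA] rAA[OF t, of GB] dpos[OF t] by (intro util_AA) (auto simp: d_def)
    also have "\<dots> \<le> u 1 * (gA * xUN t GA + (1 - gA) * xUN t GB)"
    proof (rule mult_left_mono[OF _ u(2)])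
      have "gA * (xUN t GA - xUN t GB) \<ge> 0" using gA dUNpos[OF t] by auto
      thus "xAA t GB \<le> gA * xUN t GA + (1 - gA) * xUN t GB" using e by (simp add: algebra_simps)
    qed
    also have "\<dots> = inst_utility gA u (UN_policy (xUN t)) (xUN t)" by (simp add: util_UN)
    finally show "inst_utility gA u (AA1_policy (xAA t)) (xAA t) \<le> inst_utility gA u (UN_policy (xUN t)) (xUN t)" .
  qed
  show ?thesis using part1 part2 part3 by blast
qed

end
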